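(* The map $\mathsf{Inc}$ from trees to increasing trees is a section of the forgetful map $\mathsf{Fgt}$ (i.e. $\mathsf{Fgt}(\mathsf{Inc}(T))=T$ for every tree $T$), and its linear extension is an injective morphism of unital algebras $(\overline{\mathcal{T}}_\bullet,\overline{\ast})\to(\mathcal{T}_\bullet,\overline{\ast})$, where $\overline{\ast}$ denotes left grafting on $\overline{\mathcal{T}}_\bullet$ and the restricted product on $\mathcal{T}_\bullet$.
   Context: A (planar rooted) tree is a finite planar rooted tree in which each vertex has one outgoing edge and at least two incoming edges (ordered left to right), incoming edges being leaves or coming from other vertices; $\varepsilon$ is the trivial tree with no vertex. For $m\ge1$, $\bigvee(T_0,\ldots,T_m)$ joins the roots of $T_0,\ldots,T_m$ to a new vertex with a new root; every non-trivial tree is uniquely such a wedge. A vertex with $j+1$ incoming edges carries $j$ branchings (pairs of consecutive incoming edges); the number of branchings is the degree. A level function on $T$ is a surjection $\lambda$ from the vertices onto $[k]=\{1,\ldots,k\}$ strictly increasing along each leaf-to-root path; an increasing tree is a pair $(T,\lambda)$; $\mathsf{Fgt}(T,\lambda)=T$. $\overline{\mathcal{T}}_\bullet$ (resp. $\mathcal{T}_\bullet$) is the free $\mathbb{Z}$-module on trees (resp. increasing trees), graded by number of branchings. Left grafting: $T_1\,\overline{\ast}\,T_2$ is obtained by grafting the root of $T_1$ onto the leftmost leaf of $T_2$ ($\varepsilon$ is the unit). For increasing trees, $(T_1,\lambda_1)\,\overline{\ast}\,(T_2,\lambda_2)$ is the left grafting of the underlying trees, with level $\lambda_1(v)$ on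 vertices of $T_1$ and $k_1+\lambda_2(v)$ on vertices of $T_2$, $k_1$ being the number of levels of $\lambda_1$. $\mathsf{Inc}$ is defined recursively: $\mathsf{Inc}(\varepsilon)=\varepsilon$; if $T=\bigvee(T_0,\ldots,T_m)$ and $\mathsf{Inc}(T_i)=(T_i,\lambda_i)$ with $k_i$ levels, then $\mathsf{Inc}(T)=(T,\lambda)$ where $\lambda(v)=k_0+\cdots+k_{i-1}+\lambda_i(v)$ for vertices $v$ of $T_i$ and the root vertex gets level $k_0+\cdots+k_m+1$. *)

theory Defs
  imports "HOL-Library.Poly_Mapping"
begin

text \<open>A tree is either the trivial tree Leaf (epsilon, also used for the leaves
  below a vertex) or a vertex Node ts whose incoming edges are, from left to right,
  the roots of the subtrees ts (a Leaf child is a leaf edge).\<close>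
datatype tree = Leaf | Node "tree list"

fun valid :: "tree \<Rightarrow> bool" where
  "valid Leaf = True"
| "valid (Node ts) = (2 \<le> length ts \<and> (\<forall>t\<in>set ts. valid t))"

text \<open>Vertices, addressed by their path from the root (list of child indices).\<close>
function verts :: "tree \<Rightarrow> nat list set" where
  "verts Leaf = {}"
| "verts (Node ts) = insert [] (\<Union>i<length ts. (#) i ` verts (ts ! i))"
  by pat_completeness auto
termination
  by (relation "measure size") (auto simp: less_Suc_eq_le intro!: size_list_estimation' nth_mem)

fun graft :: "tree \<Rightarrow> tree \<Rightarrow> tree" where
  "graft s Leaf = s"
| "graft s (Node []) = Node []"
| "graft s (Node (t # ts)) = Node (graft s t # ts)"

fun ldepth :: "tree \<Rightarrow> nat" where
  "ldepth Leaf = 0"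
| "ldepth (Node []) = 0"
| "ldepth (Node (t # ts)) = Suc (ldepth t)"

type_synonym itree = "tree \<times> (nat list \<Rightarrow> nat)"

definition nlevels :: "itree \<Rightarrow> nat" where
  "nlevels X = card (snd X ` verts (fst X))"

text \<open>Increasing tree: a valid tree with a level function that is a surjection of
  the vertices onto {1..k}, strictly increasing from each vertex to its parent
  (i.e. along leaf-to-root paths); normalised to 0 outside the vertices.\<close>
definition is_itree :: "itree \<Rightarrow> bool" where
  "is_itree X = (valid (fst X)
     \<and> (\<exists>k. snd X ` verts (fst X) = {1..k})
     \<and> (\<forall>v i. v @ [i] \<in> verts (fst X) \<longrightarrow> snd X (v @ [i]) < snd X v)
     \<and> (\<forall>v. v \<notin> verts (fst X) \<longrightarrow> snd X v = 0))"

definition Fgt :: "itree \<Rightarrow> tree" where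
  "Fgt X = fst X"

definition itree_unit :: itree where
  "itree_unit = (Leaf, \<lambda>_. 0)"

definition igraft :: "itree \<Rightarrow> itree \<Rightarrow> itree" where
  "igraft X Y = (graft (fst X) (fst Y),
     (\<lambda>v. if take (ldepth (fst Y)) v = replicate (ldepth (fst Y)) 0
             \<and> drop (ldepth (fst Y)) v \<in> verts (fst X)
          then snd X (drop (ldepth (fst Y)) v)
          else if v \<in> verts (fst Y) then nlevels X + snd Y v else 0))"

fun inc_lev :: "tree \<Rightarrow> (nat list \<Rightarrow> nat)" where
  "inc_lev Leaf = (\<lambda>_. 0)"
| "inc_lev (Node ts) =
    (let ls = map inc_lev ts;
         ks = map (\<lambda>(t, l). card (l ` verts t)) (zip ts ls)
     in (\<lambda>v. case v of
               [] \<Rightarrow> sum_list ks + 1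
             | i # p \<Rightarrow> if i < length ts \<and> p \<in> verts (ts ! i)
                        then sum_list (take i ks) + (ls ! i) p else 0))"

definition Inc :: "tree \<Rightarrow> itree" where
  "Inc T = (T, inc_lev T)"

definition Tbar :: "(tree \<Rightarrow>\<^sub>0 int) set" where
  "Tbar = {x. Poly_Mapping.keys x \<subseteq> {T. valid T}}"

definition Tinc :: "(itree \<Rightarrow>\<^sub>0 int) set" where
  "Tinc = {x. Poly_Mapping.keys x \<subseteq> {X. is_itree X}}"

definition bilin_ext :: "('a \<Rightarrow> 'a \<Rightarrow> 'a) \<Rightarrow> ('a \<Rightarrow>\<^sub>0 int) \<Rightarrow> ('a \<Rightarrow>\<^sub>0 int) \<Rightarrow> ('a \<Rightarrow>\<^sub>0 int)" where
  "bilin_ext f x y = frag_extend (\<lambda>a. frag_extend (\<lambda>b. frag_of (f a b)) y) x"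

definition graft_prod :: "(tree \<Rightarrow>\<^sub>0 int) \<Rightarrow> (tree \<Rightarrow>\<^sub>0 int) \<Rightarrow> (tree \<Rightarrow>\<^sub>0 int)" where
  "graft_prod = bilin_ext graft"

definition igraft_prod :: "(itree \<Rightarrow>\<^sub>0 int) \<Rightarrow> (itree \<Rightarrow>\<^sub>0 int) \<Rightarrow> (itree \<Rightarrow>\<^sub>0 int)" where
  "igraft_prod = bilin_ext igraft"

definition Inc_lin :: "(tree \<Rightarrow>\<^sub>0 int) \<Rightarrow> (itree \<Rightarrow>\<^sub>0 int)" where
  "Inc_lin = frag_extend (\<lambda>T. frag_of (Inc T))"

end

theory Submission
  imports Defs
begin

fun nv :: "tree \<Rightarrow> nat" where
  "nv Leaf = 0"
| "nv (Node ts) = Suc (sum_list (map nv ts))"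

lemma verts_Node_Cons[simp]: "(i # p \<in> verts (Node ts)) = (i < length ts \<and> p \<in> verts (ts ! i))"
  by auto

lemma verts_Nil[simp]: "[] \<in> verts (Node ts)" by simp

declare verts.simps[simp del]
lemma verts_Leaf[simp]: "verts Leaf = {}" by (simp add: verts.simps)

lemma verts_Node_cases: "v \<in> verts (Node ts) \<longleftrightarrow> v = [] \<or> (\<exists>i p. v = i # p \<and> i < length ts \<and> p \<in> verts (ts ! i))"
  by (cases v) auto

lemma UN_blocks: "(\<Union>i<length ks. {sum_list (take i ks) + 1 .. sum_list (take i ks) + ks ! i}) = {1..sum_list (ks::nat list)}"
proof (induction ks)
  case Nil then show ?case by simp
next
  case (Cons k ks)
  have "(\<Union>i<length (k#ks). {sum_list (take i (k#ks)) + 1 .. sum_list (take i (k#ks)) + (k#ks) ! i})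
     = {1..k} \<union> (\<Union>j<length ks. {sum_list (take j ks) + k + 1 .. sum_list (take j ks) + k + ks ! j})"
    by (simp add: lessThan_Suc_eq_insert_0 UN_insert ac_simps)
  also have "(\<Union>j<length ks. {sum_list (take j ks) + k + 1 .. sum_list (take j ks) + k + ks ! j})
      = (+) k ` (\<Union>j<length ks. {sum_list (take j ks) + 1 .. sum_list (take j ks) + ks ! j})"
    by (auto simp: image_UN ac_simps)
  also have "\<dots> = {k+1..k+sum_list ks}" using Cons by simp
  finally show ?case by auto
qed

lemma inc_lev_props:
  "inc_lev T ` verts T = {1..nv T} \<and> (\<forall>v. v \<notin> verts T \<longrightarrow> inc_lev T v = 0)"
proof (induction T)
  case Leaf then show ?case by simp
next
  case (Node ts)
  have IH: "\<And>t. t \<in> set ts \<Longrightarrow> inc_lev t ` verts t = {1..nv t} \<and> (\<forall>v. v \<notin> verts t \<longrightarrow> inc_lev t v = 0)"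
    using Node by auto
  have ks: "map (\<lambda>(t, l). card (l ` verts t)) (zip ts (map inc_lev ts)) = map nv ts"
    by (rule nth_equalityI) (auto simp: IH)
  define ks where "ks = map nv ts"
  have lev: "inc_lev (Node ts) = (\<lambda>v. case v of [] \<Rightarrow> sum_list ks + 1
             | i # p \<Rightarrow> if i < length ts \<and> p \<in> verts (ts ! i)
                        then sum_list (take i ks) + inc_lev (ts ! i) p else 0)"
    unfolding inc_lev.simps Let_def ks by (auto simp: ks_def fun_eq_iff split: list.split)
  have img: "inc_lev (Node ts) ` verts (Node ts) = insert (sum_list ks + 1)
     (\<Union>i<length ts. {sum_list (take i ks) + 1 .. sum_list (take i ks) + ks ! i})"
  proof -
    have "verts (Node ts) = insert [] (\<Union>i<length ts. (#) i ` verts (ts ! i))"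
      by (simp add: verts.simps)
    then have "inc_lev (Node ts) ` verts (Node ts) = insert (sum_list ks + 1)
       (\<Union>i<length ts. (\<lambda>p. sum_list (take i ks) + inc_lev (ts ! i) p) ` verts (ts ! i))"
      by (auto simp: lev image_UN image_image simp del: inc_lev.simps)
    also have "\<dots> = insert (sum_list ks + 1)
       (\<Union>i<length ts. (+) (sum_list (take i ks)) ` (inc_lev (ts ! i) ` verts (ts ! i)))"
      by (simp add: image_image)
    also have "\<dots> = insert (sum_list ks + 1)
     (\<Union>i<length ts. {sum_list (take i ks) + 1 .. sum_list (take i ks) + ks ! i})"
      by (intro arg_cong[where f="insert _"] SUP_cong refl) (simp add: IH ks_def)
    finally show ?thesis .
  qed
  have "length ks = length ts" by (simp add: ks_def)
  then have "inc_lev (Node ts) ` verts (Node ts) = {1..nv (Node ts)}"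
    using img UN_blocks[of ks] by (auto simp: ks_def)
  moreover have "\<forall>v. v \<notin> verts (Node ts) \<longrightarrow> inc_lev (Node ts) v = 0"
    by (auto simp: lev simp del: inc_lev.simps split: list.split)
  ultimately show ?case by blast
qed


lemma inc_lev_img: "inc_lev T ` verts T = {1..nv T}" using inc_lev_props by blast
lemma inc_lev_out: "v \<notin> verts T \<Longrightarrow> inc_lev T v = 0" using inc_lev_props by blast
lemma finite_verts: "finite (verts T)"
  by (induction T) (auto simp: verts.simps)
lemma card_img[simp]: "card (inc_lev T ` verts T) = nv T" by (simp add: inc_lev_img)

lemma inc_lev_Node: "inc_lev (Node ts) = (\<lambda>v. case v of [] \<Rightarrow> sum_list (map nv ts) + 1
             | i # p \<Rightarrow> if i < length ts \<and> p \<in> verts (ts ! i)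
                        then sum_list (take i (map nv ts)) + inc_lev (ts ! i) p else 0)"
proof -
  have ks: "map (\<lambda>(t, l). card (l ` verts t)) (zip ts (map inc_lev ts)) = map nv ts"
    by (rule nth_equalityI) auto
  show ?thesis
    unfolding inc_lev.simps Let_def ks by (auto simp: fun_eq_iff split: list.split)
qed
declare inc_lev.simps(2)[simp del]

lemma root_in_img: "[] \<in> verts T \<Longrightarrow> inc_lev T [] \<le> nv T"
  using inc_lev_img[of T] by auto

lemma sum_take_le: "sum_list (take (Suc i) (ks::nat list)) \<le> sum_list ks"
  by (metis append_take_drop_id le_add1 sum_list_append)

lemma prefix_closed: "v @ [i] \<in> verts T \<Longrightarrow> v \<in> verts T"
proof (induction T arbitrary: v)
  case Leaf then show ?case by simp
next
  case (Node ts) then show ?case by (cases v) auto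
qed

lemma increasing: "v @ [i] \<in> verts T \<Longrightarrow> inc_lev T (v @ [i]) < inc_lev T v"
proof (induction T arbitrary: v)
  case Leaf then show ?case by simp
next
  case (Node ts)
  show ?case
  proof (cases v)
    case Nil
    then have i: "i < length ts" "[] \<in> verts (ts ! i)" using Node.prems by auto
    have "inc_lev (ts ! i) [] \<le> nv (ts ! i)" using root_in_img i by blast
    moreover have "sum_list (take i (map nv ts)) + nv (ts ! i) \<le> sum_list (map nv ts)"
      using sum_take_le[of i "map nv ts"] i by (simp add: take_Suc_conv_app_nth)
    ultimately show ?thesis using Nil i by (simp add: inc_lev_Node)
  next
    case (Cons j p)
    then have j: "j < length ts" "p @ [i] \<in> verts (ts ! j)" using Node.prems by auto
    then have "p \<in> verts (ts ! j)" using prefix_closed by blast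
    moreover have "inc_lev (ts ! j) (p @ [i]) < inc_lev (ts ! j) p"
      using Node.IH j by auto
    ultimately show ?thesis using Cons j by (simp add: inc_lev_Node)
  qed
qed

lemma is_itree_Inc: "valid T \<Longrightarrow> is_itree (Inc T)"
  unfolding is_itree_def Inc_def using inc_lev_img increasing inc_lev_out by auto

lemma valid_Node_Cons: "valid (Node ts) \<Longrightarrow> ts \<noteq> []" by auto

lemma nv_graft: "valid t \<Longrightarrow> nv (graft s t) = nv s + nv t"
proof (induction t)
  case Leaf then show ?case by simp
next
  case (Node ts)
  then obtain u us where ts: "ts = u # us" by (cases ts) auto
  then show ?case using Node by auto
qed

lemma verts_graft: "valid t \<Longrightarrow> v \<in> verts (graft s t) \<longleftrightarrow>
   (take (ldepth t) v = replicate (ldepth t) 0 \<and> drop (ldepth t) v \<in> verts s) \<or> v \<in> verts t"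
proof (induction t arbitrary: v)
  case Leaf then show ?case by simp
next
  case (Node ts)
  then obtain u us where ts: "ts = u # us" by (cases ts) auto
  show ?case
  proof (cases v)
    case Nil then show ?thesis using ts by simp
  next
    case (Cons i p)
    then show ?thesis using ts Node by (cases i) auto
  qed
qed

lemma Inc_graft: "valid t \<Longrightarrow> Inc (graft s t) = igraft (Inc s) (Inc t)"
proof (induction t)
  case Leaf then show ?case
    by (auto simp: Inc_def igraft_def fun_eq_iff inc_lev_out)
next
  case (Node ts)
  then obtain u us where ts: "ts = u # us" by (cases ts) auto
  have vu: "valid u" "\<forall>t\<in>set us. valid t" using Node.prems ts by auto
  have IH: "inc_lev (graft s u) = snd (igraft (Inc s) (Inc u))"
  proof -
    have "Inc (graft s u) = igraft (Inc s) (Inc u)" using Node.IH[of u] vu ts by simp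
    from arg_cong[where f=snd, OF this] show ?thesis by (simp add: Inc_def)
  qed
  have nl: "nlevels (s, inc_lev s) = nv s" by (simp add: nlevels_def)
  show ?case
  proof -
    have "inc_lev (graft s (Node ts)) v = snd (igraft (Inc s) (Inc (Node ts))) v" for v
    proof (cases v)
      case Nil then show ?thesis using ts vu by (simp add: inc_lev_Node igraft_def Inc_def nl nv_graft)
    next
      case (Cons i p)
      show ?thesis
      proof (cases i)
        case 0
        have "inc_lev (graft s (Node ts)) v = inc_lev (graft s u) p"
          using Cons 0 ts inc_lev_out[of p "graft s u"] by (auto simp: inc_lev_Node)
        also have "\<dots> = snd (igraft (Inc s) (Inc (Node ts))) v"
          unfolding IH using Cons 0 ts by (simp add: igraft_def Inc_def inc_lev_Node nl)
        finally show ?thesis .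
      next
        case (Suc j)
        then show ?thesis using Cons ts vu
          by (simp add: igraft_def Inc_def inc_lev_Node nl nv_graft)
      qed
    qed
    then show ?thesis by (simp add: Inc_def igraft_def fun_eq_iff ts)
  qed
qed

lemma frag_extend_frag_extend:
  "frag_extend f (frag_extend g c) = frag_extend (\<lambda>a. frag_extend f (g a)) c"
  using subset_UNIV by (induction c rule: frag_induction) (auto simp: frag_extend_diff)

lemma Inc_lin_inj: "frag_extend (frag_of \<circ> fst) (Inc_lin x) = x"
proof -
  have "Inc_lin x = frag_extend (frag_of o Inc) x" by (simp add: Inc_lin_def o_def)
  then have "frag_extend (frag_of \<circ> fst) (Inc_lin x) = frag_extend ((frag_of \<circ> fst) o Inc) x"
    by (simp only: frag_extend_compose)
  also have "(frag_of \<circ> fst) o Inc = frag_of" by (simp add: fun_eq_iff Inc_def)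
  finally show ?thesis by (simp add: o_def flip: frag_expansion)
qed


lemma keys_Inc_lin: "x \<in> Tbar \<Longrightarrow> Inc_lin x \<in> Tinc"
  unfolding Tbar_def Tinc_def Inc_lin_def
  using keys_frag_extend[of "\<lambda>T. frag_of (Inc T)" x] is_itree_Inc by fastforce

lemma Inc_lin_graft:
  assumes "x \<in> Tbar" "y \<in> Tbar"
  shows "Inc_lin (graft_prod x y) = igraft_prod (Inc_lin x) (Inc_lin y)"
proof -
  have "Inc_lin (graft_prod x y) = frag_extend (\<lambda>a. frag_extend (\<lambda>b. frag_of (Inc (graft a b))) y) x"
    unfolding graft_prod_def bilin_ext_def Inc_lin_def
    by (simp add: frag_extend_frag_extend)
  also have "\<dots> = frag_extend (\<lambda>a. frag_extend (\<lambda>b. frag_of (igraft (Inc a) (Inc b))) y) x"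
    using assms unfolding Tbar_def
    by (intro frag_extend_eq) (auto simp: Inc_graft)
  also have "\<dots> = igraft_prod (Inc_lin x) (Inc_lin y)"
    unfolding igraft_prod_def bilin_ext_def Inc_lin_def
    by (simp add: frag_extend_frag_extend)
  finally show ?thesis .
qed

theorem lemma4p5:
  shows "(\<forall>T. valid T \<longrightarrow> is_itree (Inc T) \<and> Fgt (Inc T) = T)
    \<and> (\<forall>x\<in>Tbar. Inc_lin x \<in> Tinc)
    \<and> (\<forall>x\<in>Tbar. \<forall>y\<in>Tbar. Inc_lin (x + y) = Inc_lin x + Inc_lin y)
    \<and> (\<forall>x\<in>Tbar. \<forall>y\<in>Tbar. Inc_lin (graft_prod x y) = igraft_prod (Inc_lin x) (Inc_lin y))
    \<and> Inc_lin (frag_of Leaf) = frag_of itree_unit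
    \<and> inj_on Inc_lin Tbar"
proof (intro conjI ballI allI impI)
  show "inj_on Inc_lin Tbar"
    by (rule inj_on_inverseI[where g="frag_extend (frag_of \<circ> fst)"]) (rule Inc_lin_inj)
qed (simp_all add: is_itree_Inc Fgt_def keys_Inc_lin Inc_lin_graft,
     simp_all add: Inc_def Inc_lin_def frag_extend_add itree_unit_def)

end
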